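(* In the public project problem with equal participation costs, there is no anonymous feasible Groves mechanism that welfare dominates the VCG mechanism.
   Context: Public project problem (equal participation costs): $n\ge2$ players, decisions $D=\{0,1\}$, $\Theta_i=[0,c]$ with $c>0$, $v_i(d,\theta_i)=d(\theta_i-c/n)$; efficient decision $f(\theta)=1$ iff $\sum_i\theta_i\ge c$. A Groves mechanism has taxes $t_i(\theta)=\sum_{j\ne i}v_j(f(\theta),\theta_j)+h_i(\theta_{-i})$ for arbitrary $h_i$; player $i$'s utility is $v_i(f(\theta),\theta_i)+t_i(\theta)$. It is anonymous if all $h_i$ equal one function $h:[0,c]^{n-1}\to\mathbb{R}$ symmetric in its arguments. The VCG (Clarke) mechanism uses $h_i(\theta_{-i})=-\max_{d\in D}\sum_{j\ne i}v_j(d,\theta_j)$. Feasible: $\sum_it_i(\theta)\le0$ for all $\theta$. $t'$ welfare dominates $t$ if $\sum_i t_i(\theta)\le\sum_i t'_i(\theta)$ for all $\theta$, strictly for some $\theta$. *)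

theory Defs
  imports Main "HOL-Library.Multiset" Complex_Main
begin

text \<open>Players are indexed 0..n-1; a type profile is a real list of length n.
  Decisions D = {0,1} are represented as reals 0 and 1.\<close>

definition decisions :: "real set" where
  "decisions = {0, 1}"

definition type_space :: "nat \<Rightarrow> real \<Rightarrow> real list set" where
  "type_space n c = {\<theta>. length \<theta> = n \<and> set \<theta> \<subseteq> {0..c}}"

definition val :: "nat \<Rightarrow> real \<Rightarrow> real \<Rightarrow> real \<Rightarrow> real" where
  "val n c d x = d * (x - c / real n)"

definition eff_dec :: "real \<Rightarrow> real list \<Rightarrow> real" where
  "eff_dec c \<theta> = (if sum_list \<theta> \<ge> c then 1 else 0)"

definition others :: "real list \<Rightarrow> nat \<Rightarrow> real list" where
  "others \<theta> i = take i \<theta> @ drop (Suc i) \<theta>"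

definition groves_tax ::
  "nat \<Rightarrow> real \<Rightarrow> (nat \<Rightarrow> real list \<Rightarrow> real) \<Rightarrow> real list \<Rightarrow> nat \<Rightarrow> real" where
  "groves_tax n c hs \<theta> i =
     (\<Sum>j\<in>{0..<n} - {i}. val n c (eff_dec c \<theta>) (\<theta> ! j)) + hs i (others \<theta> i)"

definition total_tax ::
  "nat \<Rightarrow> real \<Rightarrow> (nat \<Rightarrow> real list \<Rightarrow> real) \<Rightarrow> real list \<Rightarrow> real" where
  "total_tax n c hs \<theta> = (\<Sum>i<n. groves_tax n c hs \<theta> i)"

definition symmetric_on :: "nat \<Rightarrow> real \<Rightarrow> (real list \<Rightarrow> real) \<Rightarrow> bool" where
  "symmetric_on n c h \<longleftrightarrow>
     (\<forall>xs ys. length xs = n - 1 \<and> set xs \<subseteq> {0..c} \<and> mset ys = mset xs \<longrightarrow> h ys = h xs)"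

definition anonymous :: "nat \<Rightarrow> real \<Rightarrow> (nat \<Rightarrow> real list \<Rightarrow> real) \<Rightarrow> bool" where
  "anonymous n c hs \<longleftrightarrow>
     (\<exists>h. symmetric_on n c h \<and> (\<forall>i<n. hs i = h))"

definition vcg_h :: "nat \<Rightarrow> real \<Rightarrow> nat \<Rightarrow> real list \<Rightarrow> real" where
  "vcg_h n c i xs = - Max ((\<lambda>d. \<Sum>x\<leftarrow>xs. val n c d x) ` decisions)"

definition feasible :: "nat \<Rightarrow> real \<Rightarrow> (nat \<Rightarrow> real list \<Rightarrow> real) \<Rightarrow> bool" where
  "feasible n c hs \<longleftrightarrow> (\<forall>\<theta>\<in>type_space n c. total_tax n c hs \<theta> \<le> 0)"

definition welfare_dominates ::
  "nat \<Rightarrow> real \<Rightarrow> (nat \<Rightarrow> real list \<Rightarrow> real) \<Rightarrow> (nat \<Rightarrow> real list \<Rightarrow> real) \<Rightarrow> bool" where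
  "welfare_dominates n c hs' hs \<longleftrightarrow>
     (\<forall>\<theta>\<in>type_space n c. total_tax n c hs \<theta> \<le> total_tax n c hs' \<theta>) \<and>
     (\<exists>\<theta>\<in>type_space n c. total_tax n c hs \<theta> < total_tax n c hs' \<theta>)"

end

theory Submission
  imports Defs
begin

lemma val_sum: "(\<Sum>x\<leftarrow>xs. val n c d x) = d * (sum_list xs - real (length xs) * (c / real n))"
  by (induction xs) (auto simp: val_def algebra_simps)

lemma sum_list_mset_eq: "mset (ys::real list) = mset xs \<Longrightarrow> sum_list ys = sum_list xs"
  using sum_mset_sum_list[of xs] sum_mset_sum_list[of ys] by simp

lemma others_len: "i < length t \<Longrightarrow> length (others t i) = length t - 1"
  by (simp add: others_def)

lemma others_set: "set (others t i) \<subseteq> set t"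
  unfolding others_def by (auto dest: in_set_takeD in_set_dropD)

lemma others_sum: "i < length (t::real list) \<Longrightarrow> sum_list (others t i) = sum_list t - t!i"
proof -
  assume i: "i < length t"
  have "sum_list t = sum_list (take i t @ t!i # drop (Suc i) t)"
    using id_take_nth_drop[OF i] by (rule arg_cong[where f=sum_list])
  then show ?thesis by (simp add: others_def)
qed

lemma upd_sum: "i < length (t::real list) \<Longrightarrow> sum_list (t[i:=v]) = sum_list t - t!i + v"
proof -
  assume i: "i < length t"
  have "sum_list t = sum_list (take i t @ t!i # drop (Suc i) t)"
    using id_take_nth_drop[OF i] by (rule arg_cong[where f=sum_list])
  then show ?thesis by (simp add: upd_conv_take_nth_drop[OF i] algebra_simps)
qed

lemma others_snoc_last: "others (y @ [v]) (length y) = y"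
  by (simp add: others_def)

lemma others_snoc_mset: "i < length y \<Longrightarrow> mset (others (y @ [v]) i) = mset (y[i:=v])"
  by (simp add: others_def upd_conv_take_nth_drop)

lemma sum_nth_diff: "length (t::real list) = n \<Longrightarrow> i < n \<Longrightarrow> (\<Sum>j\<in>{0..<n}-{i}. t!j) = sum_list t - t!i"
  using sum.remove[of "{0..<n}" i "(!) t"] by (simp add: sum_list_sum_nth)

lemma vcg_total:
  assumes "length t = n"
  shows "total_tax n c (vcg_h n c) t = (\<Sum>i<n. eff_dec c t * (sum_list (others t i) - real (n-1) * (c / real n))
      - max 0 (sum_list (others t i) - real (n-1) * (c / real n)))"
  unfolding total_tax_def
proof (rule sum.cong)
  fix i assume "i \<in> {..<n}"
  then have i: "i < n" by simp
  have a: "(\<Sum>j\<in>{0..<n}-{i}. val n c d (t!j)) = d * (\<Sum>j\<in>{0..<n}-{i}. t!j) - d * real (card ({0..<n}-{i})) * (c / real n)" for d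
    by (simp add: val_def sum_subtractf sum_distrib_left right_diff_distrib)
  have cd: "card ({0..<n}-{i}) = n - 1" using i by simp
  have s: "(\<Sum>j\<in>{0..<n}-{i}. t!j) = sum_list (others t i)"
    using sum_nth_diff[OF assms i] others_sum[of i t] assms i by simp
  have l: "length (others t i) = n - 1" using others_len[of i t] assms i by simp
  show "groves_tax n c (vcg_h n c) t i = eff_dec c t * (sum_list (others t i) - real (n-1) * (c / real n))
      - max 0 (sum_list (others t i) - real (n-1) * (c / real n))"
    unfolding groves_tax_def vcg_h_def decisions_def
    by (simp add: a cd s val_sum l algebra_simps)
qed simp

lemma sum_b:
  assumes "length (t::real list) = n" "n \<ge> 2"
  shows "(\<Sum>i<n. sum_list (others t i) - real (n-1) * (c / real n)) = real (n-1) * (sum_list t - c)"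
proof -
  have "(\<Sum>i<n. sum_list (others t i) - real (n-1) * (c / real n))
       = (\<Sum>i<n. sum_list t - t!i - real (n-1) * (c / real n))"
    by (rule sum.cong) (auto simp: others_sum assms)
  also have "\<dots> = real n * sum_list t - (\<Sum>i<n. t!i) - real n * (real (n-1) * (c / real n))"
    by (simp add: sum_subtractf)
  also have "(\<Sum>i<n. t!i) = sum_list t" using assms by (simp add: sum_list_sum_nth atLeast0LessThan)
  also have "real n * (real (n-1) * (c / real n)) = real (n-1) * c" using assms by simp
  finally show ?thesis using assms by (simp add: of_nat_diff algebra_simps)
qed

lemma vcg_zero_L:
  assumes "length (t::real list) = n" "n \<ge> 2"
    and L: "\<forall>i<n. sum_list (others t i) \<le> real (n-1) * (c / real n)"
  shows "total_tax n c (vcg_h n c) t = 0"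
proof -
  have "total_tax n c (vcg_h n c) t = (\<Sum>i<n. eff_dec c t * (sum_list (others t i) - real (n-1) * (c / real n)))"
    unfolding vcg_total[OF assms(1)] by (rule sum.cong) (use L in auto)
  also have "\<dots> = eff_dec c t * (real (n-1) * (sum_list t - c))"
    by (subst sum_distrib_left[symmetric], subst sum_b[OF assms(1,2)], rule refl)
  also have "\<dots> = 0"
  proof -
    have "real (n-1) * (sum_list t - c) \<le> 0"
      using sum_b[OF assms(1,2), of c] sum_mono[of "{..<n}" "\<lambda>i. sum_list (others t i) - real (n-1) * (c / real n)" "\<lambda>i. 0"] L
      by simp
    then have "sum_list t \<le> c" using assms(2)
      by (simp add: mult_le_0_iff)
    then show ?thesis by (cases "sum_list t = c") (auto simp: eff_dec_def)
  qed
  finally show ?thesis .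
qed

lemma aux_max: "0 \<le> b \<Longrightarrow> d*b - max 0 b = (d-1)*(b::real)"
  by (simp add: algebra_simps)

lemma vcg_zero_H:
  assumes "length (t::real list) = n" "n \<ge> 2"
    and H: "\<forall>i<n. sum_list (others t i) \<ge> real (n-1) * (c / real n)"
  shows "total_tax n c (vcg_h n c) t = 0"
proof -
  have "total_tax n c (vcg_h n c) t = (\<Sum>i<n. (eff_dec c t - 1) * (sum_list (others t i) - real (n-1) * (c / real n)))"
    unfolding vcg_total[OF assms(1)] by (rule sum.cong) (use H in \<open>simp_all add: left_diff_distrib\<close>)
  also have "\<dots> = (eff_dec c t - 1) * (real (n-1) * (sum_list t - c))"
    by (subst sum_distrib_left[symmetric], subst sum_b[OF assms(1,2)], rule refl)
  also have "\<dots> = 0"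
  proof -
    have "real (n-1) * (sum_list t - c) \<ge> 0"
      using sum_b[OF assms(1,2), of c] sum_mono[of "{..<n}" "\<lambda>i. 0" "\<lambda>i. sum_list (others t i) - real (n-1) * (c / real n)"] H
      by simp
    then have "sum_list t \<ge> c" using assms(2)
      by (simp add: zero_le_mult_iff)
    then show ?thesis by (auto simp: eff_dec_def)
  qed
  finally show ?thesis .
qed

lemma core:
  fixes g :: "real list \<Rightarrow> real" and S :: "real set" and P :: "real list \<Rightarrow> bool"
  assumes vS: "v \<in> S"
    and Pupd: "\<And>x i. P x \<Longrightarrow> set x \<subseteq> S \<Longrightarrow> i < length x \<Longrightarrow> P (x[i:=v])"
    and hyp: "\<And>x. length x = m \<Longrightarrow> set x \<subseteq> S \<Longrightarrow> P x \<Longrightarrow> g x + (\<Sum>i<m. g (x[i:=v])) = 0"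
  shows "length x = m \<Longrightarrow> set x \<subseteq> S \<Longrightarrow> P x \<Longrightarrow> g x = 0"
proof (induction "card {i. i<m \<and> x!i \<noteq> v}" arbitrary: x rule: less_induct)
  case less
  have eq: "g (x[i:=v]) = (if x!i = v then g x else 0)" if i: "i<m" for i
  proof (cases "x!i = v")
    case True
    then have "x[i:=v] = x" by (metis list_update_id)
    then show ?thesis using True by simp
  next
    case False
    have st: "{j. j<m \<and> x[i:=v]!j \<noteq> v} = {j. j<m \<and> x!j \<noteq> v} - {i}"
      using less.prems(1) i by (auto simp: nth_list_update)
    have "card ({j. j<m \<and> x!j \<noteq> v} - {i}) < card {j. j<m \<and> x!j \<noteq> v}"
      by (rule card_Diff1_less) (use i False in auto)
    then have lt: "card {j. j<m \<and> x[i:=v]!j \<noteq> v} < card {j. j<m \<and> x!j \<noteq> v}" using st by simp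
    have "set (x[i:=v]) \<subseteq> S" using less.prems(2) vS set_update_subset_insert by fastforce
    moreover have "P (x[i:=v])" using Pupd less.prems i by simp
    ultimately have "g (x[i:=v]) = 0" using less.hyps[OF lt] less.prems(1) by simp
    then show ?thesis using False by simp
  qed
  have "(\<Sum>i<m. g (x[i:=v])) = (\<Sum>i<m. if x!i = v then g x else 0)"
    by (rule sum.cong) (simp_all add: eq)
  also have "\<dots> = (\<Sum>i\<in>{i\<in>{..<m}. x!i = v}. g x)"
    using sum.inter_filter[of "{..<m}" "\<lambda>_. g x" "\<lambda>i. x!i = v"] by simp
  also have "\<dots> = real (card {i\<in>{..<m}. x!i = v}) * g x" by simp
  finally have "g x + real (card {i\<in>{..<m}. x!i = v}) * g x = 0"
    using hyp[OF less.prems] by simp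
  then have "(1 + real (card {i\<in>{..<m}. x!i = v})) * g x = 0" by (simp add: algebra_simps)
  moreover have "1 + real (card {i\<in>{..<m}. x!i = v}) \<noteq> 0" by (smt (verit) of_nat_0_le_iff)
  ultimately show ?case by simp
qed

theorem lemma3:
  fixes n :: nat and c :: real
  assumes "n \<ge> 2" and "c > 0"
  shows "\<not> (\<exists>hs. anonymous n c hs \<and> feasible n c hs \<and> welfare_dominates n c hs (vcg_h n c))"
proof
  assume "\<exists>hs. anonymous n c hs \<and> feasible n c hs \<and> welfare_dominates n c hs (vcg_h n c)"
  then obtain hs where an: "anonymous n c hs" and fe: "feasible n c hs"
    and wd: "welfare_dominates n c hs (vcg_h n c)" by blast
  from an obtain h where hsym: "symmetric_on n c h" and hi: "\<forall>i<n. hs i = h"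
    unfolding anonymous_def by blast
  define g where "g xs = h xs - vcg_h n c 0 xs" for xs
  define a where "a = real (n-1) * (c / real n)"
  define m where "m = n - 1"
  have nm: "n = Suc m" using assms(1) unfolding m_def by simp
  have vcgi: "vcg_h n c i = vcg_h n c 0" for i by (rule ext) (simp add: vcg_h_def)
  have diff: "total_tax n c hs t - total_tax n c (vcg_h n c) t = (\<Sum>i<n. g (others t i))" for t
    unfolding total_tax_def sum_subtractf[symmetric]
    by (rule sum.cong) (simp_all add: groves_tax_def hi g_def vcg_h_def)
  have gsym: "g ys = g xs" if "length xs = n - 1" "set xs \<subseteq> {0..c}" "mset ys = mset xs" for xs ys
  proof -
    have "h ys = h xs" using hsym that unfolding symmetric_on_def by blast
    moreover have "length ys = length xs" using that(3) by (metis size_mset)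
    moreover have "sum_list ys = sum_list xs" using that(3) by (rule sum_list_mset_eq)
    ultimately show ?thesis by (simp add: g_def vcg_h_def val_sum)
  qed
  have zero: "(\<Sum>i<n. g (others t i)) = 0"
    if tS: "t \<in> type_space n c" and R: "(\<forall>i<n. sum_list (others t i) \<le> a) \<or> (\<forall>i<n. sum_list (others t i) \<ge> a)" for t
  proof -
    have lt: "length t = n" using tS by (simp add: type_space_def)
    have v0: "total_tax n c (vcg_h n c) t = 0"
      using R vcg_zero_L[OF lt assms(1)] vcg_zero_H[OF lt assms(1)] unfolding a_def by blast
    have "total_tax n c hs t \<le> 0" using fe tS by (simp add: feasible_def)
    moreover have "total_tax n c (vcg_h n c) t \<le> total_tax n c hs t" using wd tS by (simp add: welfare_dominates_def)
    ultimately show ?thesis using diff[of t] v0 by simp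
  qed
  have gz: "g x = 0" if lx: "length x = m" and sx: "set x \<subseteq> {0..c}" for x
  proof -
    have xne: "x \<noteq> []" using lx assms(1) unfolding m_def by auto
    show ?thesis
    proof (cases "sum_list x \<le> a")
      case True
      define v where "v = Min (set x)"
      have vin: "v \<in> set x" using xne unfolding v_def by simp
      have v0: "0 \<le> v" "v \<le> c" using vin sx by auto
      have vle: "\<forall>y\<in>set x. v \<le> y" unfolding v_def by simp
      show ?thesis
      proof (rule core[where S="{v..c}" and P="\<lambda>y. sum_list y \<le> a" and v=v and m=m])
        show "v \<in> {v..c}" using v0 by simp
        show "sum_list (y[i:=v]) \<le> a" if "sum_list y \<le> a" "set y \<subseteq> {v..c}" "i < length y" for y i
        proof -
          have "y!i \<in> {v..c}" using that(2,3) nth_mem by blast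
          then show ?thesis using that by (simp add: upd_sum)
        qed
        show "length x = m" by (rule lx)
        show "set x \<subseteq> {v..c}" using sx vle by auto
        show "sum_list x \<le> a" by (rule True)
        fix y assume ly: "length y = m" and sy: "set y \<subseteq> {v..c}" and py: "sum_list y \<le> a"
        define t where "t = y @ [v]"
        have lt: "length t = n" using ly nm by (simp add: t_def)
        have st: "set t \<subseteq> {v..c}" using sy v0 by (auto simp: t_def)
        have tS: "t \<in> type_space n c" using lt st v0 by (auto simp: type_space_def)
        have "\<forall>i<n. sum_list (others t i) \<le> a"
        proof (intro allI impI)
          fix i assume "i < n"
          then have "t!i \<in> {v..c}" using st lt by (meson nth_mem subsetD)
          moreover have "sum_list t = sum_list y + v" by (simp add: t_def)
          ultimately show "sum_list (others t i) \<le> a" using others_sum[of i t] \<open>i<n\<close> lt py by simp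
        qed
        then have z: "(\<Sum>i<n. g (others t i)) = 0" using zero[OF tS] by blast
        have "(\<Sum>i<n. g (others t i)) = (\<Sum>i<m. g (others t i)) + g y"
          unfolding nm using others_snoc_last[of y v] ly by (simp add: t_def)
        also have "(\<Sum>i<m. g (others t i)) = (\<Sum>i<m. g (y[i:=v]))"
        proof (rule sum.cong)
          fix i assume "i \<in> {..<m}"
          then have i: "i < length y" using ly by simp
          have "insert v (set y) \<subseteq> {0..c}" using sy v0 by auto
          then have "set (y[i:=v]) \<subseteq> {0..c}" using set_update_subset_insert[of y i v] by (meson order_trans)
          moreover have "length (y[i:=v]) = n - 1" using ly m_def by simp
          ultimately show "g (others t i) = g (y[i:=v])"
            using gsym others_snoc_mset[OF i, of v] unfolding t_def by blast
        qed simp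
        finally show "g y + (\<Sum>i<m. g (y[i:=v])) = 0" using z by simp
      qed
    next
      case False
      then have F: "sum_list x \<ge> a" by simp
      define v where "v = Max (set x)"
      have vin: "v \<in> set x" using xne unfolding v_def by simp
      have v0: "0 \<le> v" "v \<le> c" using vin sx by auto
      have vle: "\<forall>y\<in>set x. y \<le> v" unfolding v_def by simp
      show ?thesis
      proof (rule core[where S="{0..v}" and P="\<lambda>y. sum_list y \<ge> a" and v=v and m=m])
        show "v \<in> {0..v}" using v0 by simp
        show "sum_list (y[i:=v]) \<ge> a" if "sum_list y \<ge> a" "set y \<subseteq> {0..v}" "i < length y" for y i
        proof -
          have "y!i \<in> {0..v}" using that(2,3) nth_mem by blast
          then show ?thesis using that by (simp add: upd_sum)
        qed
        show "length x = m" by (rule lx)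
        show "set x \<subseteq> {0..v}" using sx vle by auto
        show "sum_list x \<ge> a" by (rule F)
        fix y assume ly: "length y = m" and sy: "set y \<subseteq> {0..v}" and py: "sum_list y \<ge> a"
        define t where "t = y @ [v]"
        have lt: "length t = n" using ly nm by (simp add: t_def)
        have st: "set t \<subseteq> {0..v}" using sy v0 by (auto simp: t_def)
        have tS: "t \<in> type_space n c" using lt st v0 by (auto simp: type_space_def)
        have "\<forall>i<n. sum_list (others t i) \<ge> a"
        proof (intro allI impI)
          fix i assume "i < n"
          then have "t!i \<in> {0..v}" using st lt by (meson nth_mem subsetD)
          moreover have "sum_list t = sum_list y + v" by (simp add: t_def)
          ultimately show "sum_list (others t i) \<ge> a" using others_sum[of i t] \<open>i<n\<close> lt py by simp
        qed
        then have z: "(\<Sum>i<n. g (others t i)) = 0" using zero[OF tS] by blast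
        have "(\<Sum>i<n. g (others t i)) = (\<Sum>i<m. g (others t i)) + g y"
          unfolding nm using others_snoc_last[of y v] ly by (simp add: t_def)
        also have "(\<Sum>i<m. g (others t i)) = (\<Sum>i<m. g (y[i:=v]))"
        proof (rule sum.cong)
          fix i assume "i \<in> {..<m}"
          then have i: "i < length y" using ly by simp
          have "insert v (set y) \<subseteq> {0..c}" using sy v0 by auto
          then have "set (y[i:=v]) \<subseteq> {0..c}" using set_update_subset_insert[of y i v] by (meson order_trans)
          moreover have "length (y[i:=v]) = n - 1" using ly m_def by simp
          ultimately show "g (others t i) = g (y[i:=v])"
            using gsym others_snoc_mset[OF i, of v] unfolding t_def by blast
        qed simp
        finally show "g y + (\<Sum>i<m. g (y[i:=v])) = 0" using z by simp
      qed
    qed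
  qed
  from wd obtain t where tS: "t \<in> type_space n c"
    and lt: "total_tax n c (vcg_h n c) t < total_tax n c hs t"
    unfolding welfare_dominates_def by blast
  have "(\<Sum>i<n. g (others t i)) = 0"
  proof (rule sum.neutral, rule ballI)
    fix i assume "i \<in> {..<n}"
    then have i: "i < length t" using tS by (simp add: type_space_def)
    have "length (others t i) = m" using others_len[OF i] tS by (simp add: type_space_def m_def)
    moreover have "set (others t i) \<subseteq> {0..c}" using others_set[of t i] tS by (auto simp: type_space_def)
    ultimately show "g (others t i) = 0" by (rule gz)
  qed
  then show False using diff[of t] lt by simp
qed

end
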